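(* Let $\mathbb{F}$ be a field and $p$ a prime. Let $G$ be an irreducible subgroup of $\widetilde{\mathrm{M}}(p,\mathbb{F})$ whose diagonal subgroup $A=G\cap\mathrm{D}(p,\mathbb{F})$ is not contained in the group of scalar matrices. Suppose that $w\in\mathrm{GL}(p,\mathbb{F})$ satisfies $w^{-1}Gw\le\widetilde{\mathrm{M}}(p,\mathbb{F})$ and $w^{-1}Aw\le \mathrm{D}(p,\mathbb{F})$. Then $w$ is monomial; furthermore, if $\mathbb{F}$ is algebraically closed, then some scalar multiple of $w$ lies in $\widetilde{\mathrm{M}}(p,\mathbb{F})$.
   Context: $\mathrm{D}(p,\mathbb{F})$ is the group of invertible diagonal $p\times p$ matrices over $\mathbb{F}$. $\widetilde{\mathrm{M}}(p,\mathbb{F})$ denotes the group of all $p\times p$ monomial matrices whose non-zero entries are roots of unity in $\mathbb{F}$. *)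

theory Defs
  imports "HOL-Analysis.Analysis" "HOL-Computational_Algebra.Polynomial"
begin

(* p x p matrices over a field 'a are modelled as 'a ^ 'n ^ 'n with CARD('n) = p. *)

definition root_of_unity :: "'a::field \<Rightarrow> bool" where
  "root_of_unity x \<longleftrightarrow> (\<exists>k::nat. k > 0 \<and> x ^ k = 1)"

definition diag_group :: "('a::field ^ 'n ^ 'n) set" where
  "diag_group = {A. (\<forall>i j. i \<noteq> j \<longrightarrow> A $ i $ j = 0) \<and> invertible A}"

definition monomial_mat :: "'a::field ^ 'n ^ 'n \<Rightarrow> bool" where
  "monomial_mat A \<longleftrightarrow>
     (\<exists>\<sigma>. \<sigma> permutes (UNIV :: 'n set) \<and> (\<forall>i j. A $ i $ j \<noteq> 0 \<longleftrightarrow> j = \<sigma> i))"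

definition Mtilde :: "('a::field ^ 'n ^ 'n) set" where
  "Mtilde = {A. monomial_mat A \<and> (\<forall>i j. A $ i $ j \<noteq> 0 \<longrightarrow> root_of_unity (A $ i $ j))}"

definition mat_group :: "('a::field ^ 'n ^ 'n) set \<Rightarrow> bool" where
  "mat_group G \<longleftrightarrow> mat 1 \<in> G \<and> (\<forall>g\<in>G. invertible g \<and> matrix_inv g \<in> G)
     \<and> (\<forall>g\<in>G. \<forall>h\<in>G. g ** h \<in> G)"

definition lin_subspace :: "('a::field ^ 'n) set \<Rightarrow> bool" where
  "lin_subspace W \<longleftrightarrow> 0 \<in> W \<and> (\<forall>u\<in>W. \<forall>v\<in>W. u + v \<in> W) \<and> (\<forall>c. \<forall>v\<in>W. c *s v \<in> W)"

definition irreducible_mat_group :: "('a::field ^ 'n ^ 'n) set \<Rightarrow> bool" where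
  "irreducible_mat_group G \<longleftrightarrow>
     (\<forall>W. lin_subspace W \<and> (\<forall>g\<in>G. \<forall>v\<in>W. g *v v \<in> W) \<longrightarrow> W = {0} \<or> W = UNIV)"

definition alg_closed_field :: "'a::field itself \<Rightarrow> bool" where
  "alg_closed_field _ \<longleftrightarrow> (\<forall>q::'a poly. degree q > 0 \<longrightarrow> (\<exists>x. poly q x = 0))"

end

theory Submission
  imports Defs
begin


lemma minv: fixes A :: "'a::field^'n^'n" assumes "invertible A"
  shows "A ** matrix_inv A = mat 1" "matrix_inv A ** A = mat 1"
proof -
  have "\<exists>A'. A ** A' = mat 1 \<and> A' ** A = mat 1" using assms unfolding invertible_def .
  from someI_ex[OF this] show "A ** matrix_inv A = mat 1" "matrix_inv A ** A = mat 1"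
    unfolding matrix_inv_def by blast+
qed

definition sig :: "'a::field^'n^'n \<Rightarrow> 'n \<Rightarrow> 'n" where
  "sig A = (SOME \<sigma>. \<sigma> permutes UNIV \<and> (\<forall>i j. A $ i $ j \<noteq> 0 \<longleftrightarrow> j = \<sigma> i))"

lemma sig: assumes "monomial_mat A"
  shows "sig A permutes UNIV" "\<And>i j. A $ i $ j \<noteq> 0 \<longleftrightarrow> j = sig A i"
proof -
  have "\<exists>\<sigma>. \<sigma> permutes UNIV \<and> (\<forall>i j. A $ i $ j \<noteq> 0 \<longleftrightarrow> j = \<sigma> i)"
    using assms unfolding monomial_mat_def .
  from someI_ex[OF this] show "sig A permutes UNIV" "\<And>i j. A $ i $ j \<noteq> 0 \<longleftrightarrow> j = sig A i"
    unfolding sig_def by blast+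
qed

lemma sig_nz: "monomial_mat A \<Longrightarrow> A $ i $ sig A i \<noteq> 0" using sig(2) by blast
lemma sig_z: "monomial_mat A \<Longrightarrow> j \<noteq> sig A i \<Longrightarrow> A $ i $ j = 0" using sig(2) by blast

lemma mono_mult_left: assumes "monomial_mat g"
  shows "(g ** h) $ i $ j = g $ i $ sig g i * h $ sig g i $ j"
proof -
  have "(g ** h) $ i $ j = (\<Sum>k\<in>UNIV. if k = sig g i then g $ i $ sig g i * h $ sig g i $ j else 0)"
    by (simp only: matrix_matrix_mult_def matrix_vector_mult_def vec_lambda_beta, rule sum.cong) (auto simp: sig_z[OF assms])
  then show ?thesis by simp
qed

lemma mono_mult_vec: assumes "monomial_mat g"
  shows "(g *v v) $ i = g $ i $ sig g i * v $ sig g i"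
proof -
  have "(g *v v) $ i = (\<Sum>k\<in>UNIV. if k = sig g i then g $ i $ sig g i * v $ sig g i else 0)"
    by (simp only: matrix_matrix_mult_def matrix_vector_mult_def vec_lambda_beta, rule sum.cong) (auto simp: sig_z[OF assms])
  then show ?thesis by simp
qed

definition isdiag :: "'a::field^'n^'n \<Rightarrow> bool" where
  "isdiag a \<longleftrightarrow> (\<forall>i j. i \<noteq> j \<longrightarrow> a $ i $ j = 0)"

lemma diag_mult_left: assumes "isdiag a"
  shows "(a ** g) $ i $ j = a $ i $ i * g $ i $ j"
proof -
  have "(a ** g) $ i $ j = (\<Sum>k\<in>UNIV. if k = i then a $ i $ i * g $ i $ j else 0)"
    by (simp only: matrix_matrix_mult_def matrix_vector_mult_def vec_lambda_beta, rule sum.cong) (use assms in \<open>auto simp: isdiag_def\<close>)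
  then show ?thesis by simp
qed

lemma diag_mult_right: assumes "isdiag a"
  shows "(g ** a) $ i $ j = g $ i $ j * a $ j $ j"
proof -
  have "(g ** a) $ i $ j = (\<Sum>k\<in>UNIV. if k = j then g $ i $ j * a $ j $ j else 0)"
    by (simp only: matrix_matrix_mult_def matrix_vector_mult_def vec_lambda_beta, rule sum.cong) (use assms in \<open>auto simp: isdiag_def\<close>)
  then show ?thesis by simp
qed

lemma isdiag_mat: "isdiag (mat c)" unfolding isdiag_def by (simp add: mat_def)

lemma sig_mult: assumes "monomial_mat g" "monomial_mat h" "monomial_mat (g ** h)"
  shows "sig (g ** h) i = sig h (sig g i)"
proof -
  have "(g ** h) $ i $ sig h (sig g i) \<noteq> 0"
    by (simp add: mono_mult_left[OF assms(1)] sig_nz[OF assms(1)] sig_nz[OF assms(2)])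
  then have "sig h (sig g i) = sig (g ** h) i" using sig(2)[OF assms(3)] by blast
  then show ?thesis by simp
qed

lemma sig_id: assumes "monomial_mat (mat 1 :: 'a::field^'n^'n)" shows "sig (mat 1 :: 'a::field^'n^'n) i = i"
proof -
  have "(mat 1 :: 'a::field^'n^'n) $ i $ i \<noteq> 0" by (simp add: mat_def)
  then have "i = sig (mat 1 :: 'a::field^'n^'n) i" using sig(2)[OF assms] by blast
  then show ?thesis by simp
qed

lemma Mt_mono: "g \<in> Mtilde \<Longrightarrow> monomial_mat g" unfolding Mtilde_def by auto

lemma root_div: assumes "root_of_unity (x::'a::field)" "root_of_unity y"
  shows "root_of_unity (x / y)"
proof -
  obtain k where k: "k > 0" "x ^ k = 1" using assms(1) unfolding root_of_unity_def by auto
  obtain m where m: "m > 0" "y ^ m = 1" using assms(2) unfolding root_of_unity_def by auto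
  have "(x / y) ^ (k * m) = 1"
  proof -
    have "x ^ (k*m) = 1" by (simp add: power_mult k(2))
    moreover have "y ^ (k*m) = 1" by (simp add: power_mult mult.commute[of k m] m(2))
    ultimately show ?thesis by (simp add: power_divide)
  qed
  then show ?thesis unfolding root_of_unity_def using k m by (intro exI[of _ "k*m"]) simp
qed



lemma conj_diag:
  assumes MG: "mat_group G" and GM: "G \<subseteq> Mtilde" and g: "g \<in> G" and a: "a \<in> G \<inter> diag_group"
  shows "matrix_inv g ** a ** g \<in> G \<inter> diag_group"
    "\<And>i. (matrix_inv g ** a ** g) $ sig g i $ sig g i = a $ i $ i"
proof -
  define b where "b = matrix_inv g ** a ** g"
  have inv: "invertible g" "matrix_inv g \<in> G" using MG g unfolding mat_group_def by auto
  have haG: "matrix_inv g ** a \<in> G" using MG a inv unfolding mat_group_def by auto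
  have bG: "b \<in> G" using MG haG g unfolding mat_group_def b_def by auto
  have eq: "g ** b = a ** g" unfolding b_def using minv(1)[OF inv(1)] by (simp add: matrix_mul_assoc)
  have mg: "monomial_mat g" using GM g Mt_mono by auto
  have da: "isdiag a" using a unfolding diag_group_def isdiag_def by auto
  have key: "g $ i $ sig g i * b $ sig g i $ j = a $ i $ i * g $ i $ j" for i j
  proof -
    have "(g ** b) $ i $ j = (a ** g) $ i $ j" using eq by simp
    then show ?thesis by (simp add: mono_mult_left[OF mg] diag_mult_left[OF da])
  qed
  have off: "b $ sig g i $ j = 0" if "j \<noteq> sig g i" for i j
    using key[of i j] sig_z[OF mg that] sig_nz[OF mg, of i] by simp
  have diagv: "b $ sig g i $ sig g i = a $ i $ i" for i
  proof -
    have "g $ i $ sig g i * b $ sig g i $ sig g i = g $ i $ sig g i * a $ i $ i"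
      using key[of i "sig g i"] by (simp add: mult.commute)
    then show ?thesis using sig_nz[OF mg, of i] by simp
  qed
  have p: "sig g permutes UNIV" using sig(1)[OF mg] .
  have db: "isdiag b" unfolding isdiag_def
  proof (intro allI impI)
    fix k j :: 'b assume kj: "k \<noteq> j"
    have "sig g (inv (sig g) k) = k" using permutes_inverses(1)[OF p] .
    then show "b $ k $ j = 0" using off[of j "inv (sig g) k"] kj by auto
  qed
  have "invertible b" using MG bG unfolding mat_group_def by auto
  then have "b \<in> diag_group" using db unfolding diag_group_def isdiag_def by auto
  then show "matrix_inv g ** a ** g \<in> G \<inter> diag_group" using bG b_def by simp
  show "\<And>i. (matrix_inv g ** a ** g) $ sig g i $ sig g i = a $ i $ i" using diagv b_def by simp
qed

lemma transitive:
  fixes G :: "('a::field ^ 'n ^ 'n) set"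
  assumes MG: "mat_group G" and GM: "G \<subseteq> Mtilde" and irr: "irreducible_mat_group G"
  shows "\<exists>g\<in>G. sig g i = j0"
proof -
  define S where "S = {i. \<exists>g\<in>G. sig g i = j0}"
  define W where "W = {v::'a^'n. \<forall>k. k \<notin> S \<longrightarrow> v $ k = 0}"
  have lin: "lin_subspace W" unfolding lin_subspace_def W_def by simp
  have inv: "\<forall>g\<in>G. \<forall>v\<in>W. g *v v \<in> W"
  proof (intro ballI)
    fix g v assume g: "g \<in> G" and v: "v \<in> W"
    have mg: "monomial_mat g" using GM g Mt_mono by auto
    show "g *v v \<in> W" unfolding W_def
    proof (intro CollectI allI impI)
      fix k assume k: "k \<notin> S"
      have "sig g k \<notin> S"
      proof
        assume "sig g k \<in> S"
        then obtain h where h: "h \<in> G" "sig h (sig g k) = j0" unfolding S_def by auto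
        have gh: "g ** h \<in> G" using MG g h unfolding mat_group_def by auto
        have "sig (g ** h) k = j0"
          using sig_mult[OF mg Mt_mono Mt_mono] GM h gh by auto
        then show False using k gh unfolding S_def by auto
      qed
      then have "v $ sig g k = 0" using v unfolding W_def by auto
      then show "(g *v v) $ k = 0" by (simp add: mono_mult_vec[OF mg])
    qed
  qed
  have W01: "W = {0} \<or> W = UNIV" using irr lin inv unfolding irreducible_mat_group_def by blast
  have one: "mat 1 \<in> G" using MG unfolding mat_group_def by auto
  have "sig (mat 1 :: 'a^'n^'n) j0 = j0" using sig_id one GM Mt_mono by blast
  then have j0S: "j0 \<in> S" using one unfolding S_def by auto
  have ax: "axis j0 (1::'a) \<in> W" unfolding W_def using j0S by (auto simp: axis_def)
  have "axis j0 (1::'a) $ j0 \<noteq> (0::'a^'n) $ j0" by (simp add: axis_def)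
  then have "axis j0 (1::'a) \<noteq> 0" by metis
  then have "W = UNIV" using W01 ax by auto
  then have "axis i (1::'a) \<in> W" by simp
  then have "i \<in> S" unfolding W_def by (auto simp: axis_def split: if_splits)
  then show ?thesis unfolding S_def by auto
qed



lemma distinct_chars:
  fixes G :: "('a::field ^ 'n ^ 'n) set"
  assumes pr: "prime CARD('n)"
    and MG: "mat_group G" and GM: "G \<subseteq> Mtilde" and irr: "irreducible_mat_group G"
    and ns: "\<not> (G \<inter> diag_group \<subseteq> range (\<lambda>c. mat c))"
    and Rii: "\<forall>a\<in>G \<inter> diag_group. a $ i $ i = a $ i' $ i'"
  shows "i = i'"
proof -
  define A where "A = G \<inter> diag_group"
  define R where "R = (\<lambda>x y. \<forall>a\<in>A. a $ x $ x = a $ y $ y)"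
  have bk: "R x y" if "g \<in> G" "R (sig g x) (sig g y)" for g x y
  proof -
    note g = that(1) and r = that(2)
    show ?thesis unfolding R_def
  proof
    fix a assume a: "a \<in> A"
    have "matrix_inv g ** a ** g \<in> A" using conj_diag(1)[OF MG GM g] a unfolding A_def by auto
    then have "(matrix_inv g ** a ** g) $ sig g x $ sig g x = (matrix_inv g ** a ** g) $ sig g y $ sig g y"
      using r unfolding R_def by blast
    then show "a $ x $ x = a $ y $ y" using conj_diag(2)[OF MG GM g] a unfolding A_def by simp
  qed
  qed
  define C where "C = (\<lambda>j. {k. R k j})"
  have cle: "card (C j) \<le> card (C i)" for i j
  proof -
    obtain g where g: "g \<in> G" "sig g i = j" using transitive[OF MG GM irr] by blast
    have mg: "monomial_mat g" using GM g Mt_mono by auto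
    have p: "sig g permutes UNIV" using sig(1)[OF mg] .
    have inj: "inj_on (inv (sig g)) (C j)"
      using permutes_inj[OF permutes_inv[OF p]] by (simp add: inj_on_def)
    have sub: "inv (sig g) ` C j \<subseteq> C i"
    proof
      fix x assume "x \<in> inv (sig g) ` C j"
      then obtain k where k: "k \<in> C j" "x = inv (sig g) k" by auto
      have "sig g x = k" using permutes_inverses(1)[OF p] k(2) by simp
      then have "R (sig g x) (sig g i)" using k(1) g(2) unfolding C_def by simp
      then show "x \<in> C i" using bk g(1) unfolding C_def by auto
    qed
    show ?thesis using card_inj_on_le[OF inj sub] by simp
  qed
  have ceq: "card (C i) = card (C j)" for i j using cle[of i j] cle[of j i] by simp
  define r where "r = {(x,y). R x y}"
  have Rsym: "R a b \<longleftrightarrow> R b a" for a b unfolding R_def by auto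
  have Rtr: "R a c" if "R a b" "R b c" for a b c using that unfolding R_def by simp
  have Rrefl: "R a a" for a unfolding R_def by simp
  have eqv: "equiv UNIV r" unfolding equiv_def refl_on_def sym_def trans_def r_def
    using Rsym Rtr Rrefl by blast
  define k where "k = card (C i')"
  have "k dvd card (UNIV::'n set)"
  proof (rule equiv_imp_dvd_card[OF finite eqv])
    fix X assume "X \<in> UNIV // r"
    then obtain x where "X = r `` {x}" unfolding quotient_def by auto
    then have "X = C x" unfolding C_def r_def using Rsym by blast
    then show "k dvd card X" using ceq[of x i'] k_def by simp
  qed
  moreover from pr have "\<forall>m. m dvd CARD('n) \<longrightarrow> m = 1 \<or> m = CARD('n)" unfolding prime_nat_iff by (elim conjE)
  ultimately have k1p: "k = 1 \<or> k = CARD('n)" by simp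
  have "k \<noteq> CARD('n)"
  proof
    assume "k = CARD('n)"
    then have "card (C i') = card (UNIV :: 'n set)" using k_def by simp
    then have "C i' = UNIV" by (rule card_subset_eq[OF finite subset_UNIV])
    then have all: "R x i'" for x unfolding C_def by auto
    have "A \<subseteq> range (\<lambda>c. mat c)"
    proof
      fix a assume a: "a \<in> A"
      have "a = mat (a $ i' $ i')"
      proof (subst vec_eq_iff, intro allI, subst vec_eq_iff, intro allI)
        fix x y
        show "a $ x $ y = mat (a $ i' $ i') $ x $ y"
        proof (cases "x = y")
          case True then show ?thesis using all[of x] a unfolding R_def by (simp add: mat_def)
        next
          case False then show ?thesis using a unfolding A_def diag_group_def by (simp add: mat_def)
        qed
      qed
      then show "a \<in> range (\<lambda>c. mat c)" by blast
    qed
    then show False using ns A_def by simp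
  qed
  with k1p have "k = 1" by simp
  moreover have "i \<in> C i'" "i' \<in> C i'" using Rii unfolding C_def R_def A_def by auto
  ultimately have "\<forall>a1\<in>C i'. \<forall>a2\<in>C i'. a1 = a2" using card_le_Suc0_iff_eq[OF finite, of "C i'"] k_def by simp
  then show "i = i'" using \<open>i \<in> C i'\<close> \<open>i' \<in> C i'\<close> by blast
qed



theorem theorem2p10:
  fixes G :: "('a::field ^ 'n ^ 'n) set" and w :: "'a ^ 'n ^ 'n"
  assumes "prime CARD('n)"
    and "mat_group G" and "G \<subseteq> Mtilde" and "irreducible_mat_group G"
    and "\<not> (G \<inter> diag_group \<subseteq> range (\<lambda>c. mat c))"
    and "invertible w"
    and "\<forall>g\<in>G. matrix_inv w ** g ** w \<in> Mtilde"
    and "\<forall>a\<in>G \<inter> diag_group. matrix_inv w ** a ** w \<in> diag_group"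
  shows "monomial_mat w \<and>
         (alg_closed_field TYPE('a) \<longrightarrow> (\<exists>c. mat c ** w \<in> Mtilde))"
proof -
  note pr = assms(1) and MG = assms(2) and GM = assms(3) and irr = assms(4) and ns = assms(5)
    and winv = assms(6) and wG = assms(7) and wA = assms(8)
  have wm: "w ** matrix_inv w = mat 1" "matrix_inv w ** w = mat 1" using minv[OF winv] by auto
  have colu: "i = i'" if "w $ i $ j \<noteq> 0" "w $ i' $ j \<noteq> 0" for i i' j
  proof -
    have "\<forall>a\<in>G \<inter> diag_group. a $ i $ i = a $ i' $ i'"
    proof
      fix a assume a: "a \<in> G \<inter> diag_group"
      define b where "b = matrix_inv w ** a ** w"
      have bd: "b \<in> diag_group" using wA a b_def by auto
      have wb: "w ** b = a ** w" unfolding b_def using wm(1) by (simp add: matrix_mul_assoc)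
      have da: "isdiag a" using a unfolding diag_group_def isdiag_def by auto
      have db: "isdiag b" using bd unfolding diag_group_def isdiag_def by auto
      have e: "w $ x $ j * b $ j $ j = w $ x $ j * a $ x $ x" for x
      proof -
        have "(w ** b) $ x $ j = (a ** w) $ x $ j" using wb by simp
        then show ?thesis by (simp add: diag_mult_right[OF db] diag_mult_left[OF da] mult.commute)
      qed
      have "a $ i $ i = b $ j $ j" using e[of i] that(1) by simp
      moreover have "a $ i' $ i' = b $ j $ j" using e[of i'] that(2) by simp
      ultimately show "a $ i $ i = a $ i' $ i'" by simp
    qed
    then show ?thesis by (rule distinct_chars[OF pr MG GM irr ns])
  qed
  have colnz: "\<exists>i. w $ i $ j \<noteq> 0" for j
  proof (rule ccontr)
    assume "\<not> ?thesis" then have z: "\<forall>i. w $ i $ j = 0" by simp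
    have "(matrix_inv w ** w) $ j $ j = 0" unfolding matrix_matrix_mult_def using z by simp
    then show False using wm(2) by (simp add: mat_def)
  qed
  have rownz: "\<exists>j. w $ i $ j \<noteq> 0" for i
  proof (rule ccontr)
    assume "\<not> ?thesis" then have z: "\<forall>j. w $ i $ j = 0" by simp
    have "(w ** matrix_inv w) $ i $ i = 0" unfolding matrix_matrix_mult_def using z by simp
    then show False using wm(1) by (simp add: mat_def)
  qed
  obtain \<tau> where tau: "\<forall>j. w $ \<tau> j $ j \<noteq> 0"
    using choice[of "\<lambda>j i. w $ i $ j \<noteq> 0"] colnz by blast
  have tiff: "w $ i $ j \<noteq> 0 \<longleftrightarrow> i = \<tau> j" for i j using colu tau by blast
  have surjt: "UNIV \<subseteq> range \<tau>"
  proof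
    fix i :: 'n
    obtain j where "w $ i $ j \<noteq> 0" using rownz by blast
    then have "i = \<tau> j" using tiff by blast
    then show "i \<in> range \<tau>" by blast
  qed
  have "inj_on \<tau> UNIV" by (rule finite_surj_inj[OF finite surjt])
  then have "bij_betw \<tau> UNIV UNIV" using surjt unfolding bij_betw_def by blast
  then have pt: "\<tau> permutes UNIV" by (rule bij_imp_permutes) simp
  have mw: "monomial_mat w" unfolding monomial_mat_def
  proof (intro exI conjI allI)
    show "inv \<tau> permutes UNIV" using permutes_inv[OF pt] .
    fix i j
    show "w $ i $ j \<noteq> 0 \<longleftrightarrow> j = inv \<tau> i"
      using tiff[of i j] permutes_inverses[OF pt] by metis
  qed
  define d where "d = (\<lambda>i. w $ i $ sig w i)"
  have dnz: "d i \<noteq> 0" for i unfolding d_def using sig_nz[OF mw] .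
  have ratio: "root_of_unity (d (sig g i) / d i)" if g: "g \<in> G" for g i
  proof -
    define h where "h = matrix_inv w ** g ** w"
    have hM: "h \<in> Mtilde" using wG g h_def by auto
    have mh: "monomial_mat h" using hM Mt_mono by auto
    have mg: "monomial_mat g" using GM g Mt_mono by auto
    have gM: "g \<in> Mtilde" using GM g by auto
    have wh: "w ** h = g ** w" unfolding h_def using wm(1) by (simp add: matrix_mul_assoc)
    define j where "j = sig w (sig g i)"
    have "(w ** h) $ i $ j = (g ** w) $ i $ j" using wh by simp
    then have eq: "d i * h $ sig w i $ j = g $ i $ sig g i * d (sig g i)"
      by (simp add: mono_mult_left[OF mw] mono_mult_left[OF mg] d_def j_def)
    have gnz: "g $ i $ sig g i \<noteq> 0" using sig_nz[OF mg] .
    then have hnz: "h $ sig w i $ j \<noteq> 0" using eq dnz[of i] dnz[of "sig g i"] by auto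
    have rh: "root_of_unity (h $ sig w i $ j)" using hM hnz unfolding Mtilde_def by auto
    have rg: "root_of_unity (g $ i $ sig g i)" using gM gnz unfolding Mtilde_def by auto
    have "d (sig g i) / d i = h $ sig w i $ j / g $ i $ sig g i"
      using eq dnz[of i] gnz by (simp add: field_simps)
    then show ?thesis using root_div[OF rh rg] by simp
  qed
  have allr: "root_of_unity (d j / d undefined)" for j
  proof -
    obtain g where "g \<in> G" "sig g undefined = j" using transitive[OF MG GM irr] by blast
    then show ?thesis using ratio by blast
  qed
  define c where "c = inverse (d undefined)"
  have cnz: "c \<noteq> 0" using dnz c_def by simp
  have ent: "(mat c ** w) $ i $ j = c * w $ i $ j" for i j
    using diag_mult_left[OF isdiag_mat, of c w i j] by (simp add: mat_def)
  have "mat c ** w \<in> Mtilde" unfolding Mtilde_def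
  proof (intro CollectI conjI allI impI)
    show "monomial_mat (mat c ** w)" unfolding monomial_mat_def
      using sig[OF mw] cnz by (intro exI[of _ "sig w"]) (simp add: ent)
    fix i j assume nz: "(mat c ** w) $ i $ j \<noteq> 0"
    then have "j = sig w i" using sig_z[OF mw] ent by fastforce
    then have "(mat c ** w) $ i $ j = c * d i" by (simp add: ent d_def)
    also have "c * d i = d i / d undefined" by (simp add: c_def divide_inverse mult.commute)
    finally have "(mat c ** w) $ i $ j = d i / d undefined" .
    then show "root_of_unity ((mat c ** w) $ i $ j)" using allr by simp
  qed
  then show ?thesis using mw by blast
qed

end
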